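(* Let $\mathcal G$ be a $\sigma$-compact locally compact Hausdorff étale groupoid, $\ell$ a continuous, proper, controlled length function on $\mathcal G$, and $\rho$ the induced extended metric. Let $u\in\mathcal G^{(0)}$ and $R,\varepsilon>0$. Then there are $S\in[R,R+\varepsilon)$, an open neighborhood $V$ of $u$ in $\mathcal G^{(0)}$, an open set $W\subseteq\mathcal G$ and a homeomorphism $f:\bar B_\rho(u,S)\times V\to W$ such that: (1) $f(u,v)=v$ for all $v\in V$; (2) $f(x,u)=x$ for all $x\in\bar B_\rho(u,S)$; (3) $f(\bar B_\rho(u,S)\times\{v\})=\bar B_\rho(v,S)$ for all $v\in V$; (4) $|\rho(x,y)-\rho(f(x,v),f(y,v))|<\varepsilon$ for all $x,y\in\bar B_\rho(u,S)$ and $v\in V$.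
   Context: A length function is $\ell:\mathcal G\to[0,\infty)$ with $\ell(x)=0$ iff $x\in\mathcal G^{(0)}$, $\ell(x^{-1})=\ell(x)$, $\ell(xy)\le\ell(x)+\ell(y)$ for composable $x,y$. It is proper if every $K\subseteq\mathcal G\setminus\mathcal G^{(0)}$ with $\sup_K\ell<\infty$ is precompact, and controlled if $\sup_K\ell<\infty$ for every precompact $K$. The induced extended metric is $\rho(x,y)=\ell(xy^{-1})$ if $s(x)=s(y)$ and $\rho(x,y)=\infty$ otherwise. $\bar B_\rho(x,S)=\{y:\rho(x,y)\le S\}$ (a finite subset of the source fiber of $x$). *)

theory Defs
  imports "HOL-Analysis.Analysis"
begin

text \<open>A groupoid whose arrows are all elements of the type 'g, given by source s,
range r, inverse iv and (partial) multiplication mul; mul x y is meaningful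
when s x = r y.\<close>

definition gunits :: "('g \<Rightarrow> 'g) \<Rightarrow> 'g set" where
  "gunits s = {x. s x = x}"

definition groupoid ::
  "('g \<Rightarrow> 'g) \<Rightarrow> ('g \<Rightarrow> 'g) \<Rightarrow> ('g \<Rightarrow> 'g) \<Rightarrow> ('g \<Rightarrow> 'g \<Rightarrow> 'g) \<Rightarrow> bool" where
  "groupoid s r iv mul \<longleftrightarrow>
     (\<forall>x. s (s x) = s x \<and> r (r x) = r x \<and> s (r x) = r x \<and> r (s x) = s x) \<and>
     (\<forall>x y. s x = r y \<longrightarrow> s (mul x y) = s y \<and> r (mul x y) = r x) \<and>
     (\<forall>x y z. s x = r y \<longrightarrow> s y = r z \<longrightarrow> mul (mul x y) z = mul x (mul y z)) \<and>
     (\<forall>x. mul (r x) x = x \<and> mul x (s x) = x) \<and>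
     (\<forall>x. s (iv x) = r x \<and> r (iv x) = s x \<and> mul x (iv x) = r x \<and> mul (iv x) x = s x)"

definition local_homeomorphism :: "('a::topological_space \<Rightarrow> 'b::topological_space) \<Rightarrow> bool" where
  "local_homeomorphism f \<longleftrightarrow>
     continuous_on UNIV f \<and>
     (\<forall>x. \<exists>U. open U \<and> x \<in> U \<and> open (f ` U) \<and> (\<exists>g. homeomorphism U (f ` U) f g))"

definition topological_groupoid ::
  "('g::topological_space \<Rightarrow> 'g) \<Rightarrow> ('g \<Rightarrow> 'g) \<Rightarrow> ('g \<Rightarrow> 'g) \<Rightarrow> ('g \<Rightarrow> 'g \<Rightarrow> 'g) \<Rightarrow> bool" where
  "topological_groupoid s r iv mul \<longleftrightarrow>
     groupoid s r iv mul \<and> continuous_on UNIV s \<and> continuous_on UNIV r \<and>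
     continuous_on UNIV iv \<and>
     continuous_on {p. s (fst p) = r (snd p)} (\<lambda>p. mul (fst p) (snd p))"

definition etale_groupoid ::
  "('g::topological_space \<Rightarrow> 'g) \<Rightarrow> ('g \<Rightarrow> 'g) \<Rightarrow> ('g \<Rightarrow> 'g) \<Rightarrow> ('g \<Rightarrow> 'g \<Rightarrow> 'g) \<Rightarrow> bool" where
  "etale_groupoid s r iv mul \<longleftrightarrow>
     topological_groupoid s r iv mul \<and> local_homeomorphism s \<and> local_homeomorphism r"

definition sigma_compact_space :: "'a::topological_space itself \<Rightarrow> bool" where
  "sigma_compact_space _ \<longleftrightarrow> (\<exists>K::nat \<Rightarrow> 'a set. (\<forall>n. compact (K n)) \<and> (\<Union>n. K n) = UNIV)"

definition length_function ::
  "('g \<Rightarrow> 'g) \<Rightarrow> ('g \<Rightarrow> 'g) \<Rightarrow> ('g \<Rightarrow> 'g) \<Rightarrow> ('g \<Rightarrow> 'g \<Rightarrow> 'g) \<Rightarrow> ('g \<Rightarrow> real) \<Rightarrow> bool" where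
  "length_function s r iv mul len \<longleftrightarrow>
     (\<forall>x. len x \<ge> 0) \<and> (\<forall>x. len x = 0 \<longleftrightarrow> x \<in> gunits s) \<and>
     (\<forall>x. len (iv x) = len x) \<and>
     (\<forall>x y. s x = r y \<longrightarrow> len (mul x y) \<le> len x + len y)"

text \<open>Precompact = relatively compact (closure compact); the space is Hausdorff.\<close>
definition proper_length :: "('g::topological_space \<Rightarrow> 'g) \<Rightarrow> ('g \<Rightarrow> real) \<Rightarrow> bool" where
  "proper_length s len \<longleftrightarrow>
     (\<forall>K. K \<subseteq> - gunits s \<longrightarrow> bdd_above (len ` K) \<longrightarrow> compact (closure K))"

definition controlled_length :: "('g::topological_space \<Rightarrow> real) \<Rightarrow> bool" where
  "controlled_length len \<longleftrightarrow> (\<forall>K. compact (closure K) \<longrightarrow> bdd_above (len ` K))"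

definition ext_metric ::
  "('g \<Rightarrow> 'g) \<Rightarrow> ('g \<Rightarrow> 'g) \<Rightarrow> ('g \<Rightarrow> 'g \<Rightarrow> 'g) \<Rightarrow> ('g \<Rightarrow> real) \<Rightarrow> 'g \<Rightarrow> 'g \<Rightarrow> ereal" where
  "ext_metric s iv mul len x y = (if s x = s y then ereal (len (mul x (iv y))) else \<infinity>)"

definition closed_ball_rho ::
  "('g \<Rightarrow> 'g) \<Rightarrow> ('g \<Rightarrow> 'g) \<Rightarrow> ('g \<Rightarrow> 'g \<Rightarrow> 'g) \<Rightarrow> ('g \<Rightarrow> real) \<Rightarrow> 'g \<Rightarrow> real \<Rightarrow> 'g set" where
  "closed_ball_rho s iv mul len x S = {y. ext_metric s iv mul len x y \<le> ereal S}"

end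

theory Submission
  imports Defs
begin

lemma grp_facts:
  assumes "groupoid s r iv mul"
  shows "\<And>x. s (s x) = s x" "\<And>x. r (s x) = s x" "\<And>x. s (iv x) = r x" "\<And>x. r (iv x) = s x"
    "\<And>x. mul (r x) x = x"
  using assms unfolding groupoid_def by auto

lemma unit_mul_iv:
  assumes "groupoid s r iv mul" "s v = v" "s y = v"
  shows "mul v (iv y) = iv y"
  using grp_facts[OF assms(1)] assms(2,3) by metis

lemma ball_unit:
  assumes "groupoid s r iv mul" "length_function s r iv mul len" "s v = v"
  shows "closed_ball_rho s iv mul len v S = {y. s y = v \<and> len y \<le> S}"
proof -
  have li: "len (iv y) = len y" for y using assms(2) unfolding length_function_def by auto
  show ?thesis
    unfolding closed_ball_rho_def ext_metric_def
    using unit_mul_iv[OF assms(1) assms(3)] assms(3) li by auto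
qed

lemma metric_same:
  "s x = s y \<Longrightarrow> ext_metric s iv mul len x y = ereal (len (mul x (iv y)))"
  unfolding ext_metric_def by auto

lemma bisections:
  assumes "local_homeomorphism (s::'g::topological_space \<Rightarrow> 'g)"
  obtains N gi where "\<And>x. open (N x) \<and> x \<in> N x \<and> open (s ` N x) \<and> homeomorphism (N x) (s ` N x) s (gi x)"
proof -
  have "\<forall>x. \<exists>p. open (fst p) \<and> x \<in> fst p \<and> open (s ` fst p) \<and> homeomorphism (fst p) (s ` fst p) s (snd p)"
    using assms unfolding local_homeomorphism_def by fastforce
  then obtain P where "\<forall>x. open (fst (P x)) \<and> x \<in> fst (P x) \<and> open (s ` fst (P x)) \<and> homeomorphism (fst (P x)) (s ` fst (P x)) s (snd (P x))"
    by metis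
  then show ?thesis using that[of "\<lambda>x. fst (P x)" "\<lambda>x. snd (P x)"] by blast
qed

lemma open_preimage_at:
  assumes "open Op" "continuous_on Op h" "open T"
  shows "open (Op \<inter> h -` T)"
  using assms continuous_on_open_vimage by (metis inf_commute)

theorem mainTheorem15:
  fixes s r iv :: "'g::t2_space \<Rightarrow> 'g" and mul :: "'g \<Rightarrow> 'g \<Rightarrow> 'g"
    and len :: "'g \<Rightarrow> real" and u :: 'g and R \<epsilon> :: real
  assumes "etale_groupoid s r iv mul"
    and "locally_compact_space (euclidean :: 'g topology)"
    and "sigma_compact_space TYPE('g)"
    and "length_function s r iv mul len"
    and "continuous_on UNIV len" and "proper_length s len" and "controlled_length len"
    and "u \<in> gunits s" and "R > 0" and "\<epsilon> > 0"
  shows "\<exists>S V W (f :: 'g \<times> 'g \<Rightarrow> 'g).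
    R \<le> S \<and> S < R + \<epsilon> \<and>
    openin (top_of_set (gunits s)) V \<and> u \<in> V \<and> open W \<and>
    (\<exists>g. homeomorphism (closed_ball_rho s iv mul len u S \<times> V) W f g) \<and>
    (\<forall>v\<in>V. f (u, v) = v) \<and>
    (\<forall>x\<in>closed_ball_rho s iv mul len u S. f (x, u) = x) \<and>
    (\<forall>v\<in>V. f ` (closed_ball_rho s iv mul len u S \<times> {v}) = closed_ball_rho s iv mul len v S) \<and>
    (\<forall>x\<in>closed_ball_rho s iv mul len u S. \<forall>y\<in>closed_ball_rho s iv mul len u S. \<forall>v\<in>V.
       \<bar>ext_metric s iv mul len x y - ext_metric s iv mul len (f (x, v)) (f (y, v))\<bar> < ereal \<epsilon>)"
proof -
  have grp: "groupoid s r iv mul" and cs: "continuous_on UNIV s" and ci: "continuous_on UNIV iv"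
    and cm: "continuous_on {p. s (fst p) = r (snd p)} (\<lambda>p. mul (fst p) (snd p))"
    and lhs: "local_homeomorphism s"
    using assms(1) unfolding etale_groupoid_def topological_groupoid_def by auto
  note gf = grp_facts[OF grp]
  have lf: "\<And>x. len (iv x) = len x" "\<And>x. len x = 0 \<longleftrightarrow> s x = x" "\<And>x. len x \<ge> 0"
    using assms(4) unfolding length_function_def gunits_def by auto
  have clen: "continuous_on UNIV len" by fact
  have su: "s u = u" using assms(8) unfolding gunits_def by auto
  obtain N gi where Nh: "\<And>x. open (N x) \<and> x \<in> N x \<and> open (s ` N x) \<and> homeomorphism (N x) (s ` N x) s (gi x)"
    using bisections[OF lhs] by blast
  have NO: "\<And>x. open (N x)" "\<And>x. x \<in> N x" "\<And>x. open (s ` N x)" using Nh by auto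
  have gi1: "\<And>x y. y \<in> N x \<Longrightarrow> gi x (s y) = y"
    using Nh unfolding homeomorphism_def by blast
  have gi2: "\<And>x v. v \<in> s ` N x \<Longrightarrow> s (gi x v) = v \<and> gi x v \<in> N x"
    using gi1 by auto
  have gic: "\<And>x. continuous_on (s ` N x) (gi x)"
    using Nh unfolding homeomorphism_def by blast
  have sinj: "\<And>x y z. y \<in> N x \<Longrightarrow> z \<in> N x \<Longrightarrow> s y = s z \<Longrightarrow> y = z"
    using gi1 by metis
  have giimg: "\<And>x A. A \<subseteq> s ` N x \<Longrightarrow> gi x ` A = N x \<inter> s -` A"
  proof -
    fix x A assume A: "A \<subseteq> s ` N x"
    show "gi x ` A = N x \<inter> s -` A"
    proof
      show "gi x ` A \<subseteq> N x \<inter> s -` A" using A gi2 by force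
      show "N x \<inter> s -` A \<subseteq> gi x ` A"
      proof
        fix y assume "y \<in> N x \<inter> s -` A"
        then show "y \<in> gi x ` A" using gi1[of y x] by (metis IntD1 IntD2 image_eqI vimageD)
      qed
    qed
  qed
  have openpre: "\<And>h T. continuous_on UNIV h \<Longrightarrow> open T \<Longrightarrow> open (h -` T)"
    using open_preimage_at[of UNIV] by (metis inf_top_left open_UNIV)
  have unitsopen: "open (gunits s)"
  proof -
    have "gunits s = (\<Union>x. s ` N x)"
    proof
      show "gunits s \<subseteq> (\<Union>x. s ` N x)"
      proof
        fix y assume "y \<in> gunits s"
        then have "y = s y" unfolding gunits_def by simp
        then show "y \<in> (\<Union>x. s ` N x)" using NO(2)[of y] by blast
      qed
      show "(\<Union>x. s ` N x) \<subseteq> gunits s" unfolding gunits_def using gf(1) by auto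
    qed
    then show ?thesis using NO(3) by auto
  qed
  have fin: "\<And>T. finite {y. s y = u \<and> len y \<le> T}"
  proof -
    fix T
    define K where "K = {y. y \<notin> gunits s \<and> len y \<le> T}"
    have "K \<subseteq> - gunits s" unfolding K_def by auto
    moreover have "bdd_above (len ` K)" unfolding K_def bdd_above_def by auto
    ultimately have "compact (closure K)"
      using assms(6) unfolding proper_length_def by blast
    moreover have "closed (s -` {u})"
    proof -
      have "open (s -` (- {u}))" using openpre[OF cs] by auto
      then show ?thesis by (simp add: closed_def vimage_Compl)
    qed
    ultimately have cP: "compact (closure K \<inter> s -` {u})" by (rule compact_Int_closed)
    define P where "P = closure K \<inter> s -` {u}"
    have "P \<subseteq> \<Union> (N ` P)" using NO(2) by auto
    then obtain TT where TT: "TT \<subseteq> N ` P" "finite TT" "P \<subseteq> \<Union>TT"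
      using compactE[of P "N ` P"] cP NO(1) unfolding P_def by blast
    then obtain P' where P': "P' \<subseteq> P" "finite P'" "TT = N ` P'"
      using finite_subset_image by metis
    have "P \<subseteq> P'"
    proof
      fix z assume z: "z \<in> P"
      then obtain y where y: "y \<in> P'" "z \<in> N y" using TT P' by auto
      have "s z = s y" using z y P' unfolding P_def by auto
      then have "z = y" using sinj[OF y(2) NO(2)[of y]] by simp
      then show "z \<in> P'" using y by simp
    qed
    then have fP: "finite P" using P' finite_subset by blast
    have "{y. s y = u \<and> len y \<le> T} \<subseteq> insert u P"
    proof
      fix y assume y: "y \<in> {y. s y = u \<and> len y \<le> T}"
      show "y \<in> insert u P"
      proof (cases "y \<in> gunits s")
        case True then show ?thesis using y unfolding gunits_def by auto
      next
        case False then have "y \<in> K" using y unfolding K_def by auto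
        then show ?thesis using y closure_subset unfolding P_def by blast
      qed
    qed
    then show "finite {y. s y = u \<and> len y \<le> T}" using fP finite_subset by blast
  qed
  define L where "L = len ` {y. s y = u \<and> len y \<le> R + \<epsilon>}"
  have "finite L" unfolding L_def using fin by blast
  moreover have "infinite {R..<R+\<epsilon>}" using assms(10) by simp
  ultimately have "infinite ({R..<R+\<epsilon>} - L)" using Diff_infinite_finite by blast
  then obtain S where S: "S \<in> {R..<R+\<epsilon>}" "S \<notin> L" by (metis Diff_iff finite.emptyI ex_in_conv)
  have S0: "S > 0" using S assms(9) by auto
  define B where "B = closed_ball_rho s iv mul len u S"
  have Beq: "B = {y. s y = u \<and> len y \<le> S}" unfolding B_def using ball_unit[OF grp assms(4) su] .
  have finB: "finite B" unfolding Beq using fin .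
  have Blt: "\<And>y. y \<in> B \<Longrightarrow> len y < S"
  proof -
    fix y assume "y \<in> B"
    then have "s y = u" "len y \<le> S" unfolding Beq by auto
    moreover have "len y \<noteq> S" using S `s y = u` `len y \<le> S` unfolding L_def by force
    ultimately show "len y < S" by simp
  qed
  have uB: "u \<in> B" unfolding Beq using su lf(2)[of u] S0 by simp
  have sB: "\<And>y. y \<in> B \<Longrightarrow> s y = u" unfolding Beq by auto
  define Q where "Q x y p \<longleftrightarrow> (x \<noteq> y \<longrightarrow> open (fst p) \<and> open (snd p) \<and> x \<in> fst p \<and> y \<in> snd p \<and> fst p \<inter> snd p = {})" for x y :: 'g and p
  have Qex: "\<exists>p. Q x y p" for x y
  proof (cases "x = y")
    case True then show ?thesis unfolding Q_def by simp
  next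
    case False
    then obtain U V where "open U" "open V" "x \<in> U" "y \<in> V" "U \<inter> V = {}"
      using hausdorff[OF False] by blast
    then have "Q x y (U, V)" unfolding Q_def fst_conv snd_conv by blast
    then show ?thesis by blast
  qed
  define P where "P x y = (SOME p. Q x y p)" for x y
  have P: "\<And>x y. x \<noteq> y \<Longrightarrow> open (fst (P x y)) \<and> open (snd (P x y)) \<and> x \<in> fst (P x y) \<and> y \<in> snd (P x y) \<and> fst (P x y) \<inter> snd (P x y) = {}"
  proof -
    fix x y :: 'g assume "x \<noteq> y"
    have "Q x y (P x y)" unfolding P_def using someI_ex[OF Qex] .
    then show "open (fst (P x y)) \<and> open (snd (P x y)) \<and> x \<in> fst (P x y) \<and> y \<in> snd (P x y) \<and> fst (P x y) \<inter> snd (P x y) = {}"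
      unfolding Q_def using `x \<noteq> y` by blast
  qed
  define D where "D x = (\<Inter>y\<in>B - {x}. fst (P x y) \<inter> snd (P y x))" for x
  have Dopen: "\<And>x. open (D x)" unfolding D_def using finB P by (intro open_INT) auto
  have Dmem: "x \<in> D x" for x unfolding D_def
  proof (rule INT_I)
    fix y assume "y \<in> B - {x}"
    then have "x \<noteq> y" by auto
    then show "x \<in> fst (P x y) \<inter> snd (P y x)" using P[of x y] P[of y x] by auto
  qed
  have Ddisj: "\<And>x y. x \<in> B \<Longrightarrow> y \<in> B \<Longrightarrow> x \<noteq> y \<Longrightarrow> D x \<inter> D y = {}"
  proof -
    fix x y assume xy: "x \<in> B" "y \<in> B" "x \<noteq> y"
    have "D x \<subseteq> fst (P x y)" unfolding D_def using xy by auto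
    moreover have "D y \<subseteq> snd (P x y)" unfolding D_def using xy by auto
    ultimately show "D x \<inter> D y = {}" using P[OF xy(3)] by blast
  qed
  define KS where "KS = {y. y \<notin> gunits s \<and> len y \<le> S}"
  have "KS \<subseteq> - gunits s" unfolding KS_def by auto
  moreover have "bdd_above (len ` KS)" unfolding KS_def bdd_above_def by auto
  ultimately have cC: "compact (closure KS)"
    using assms(6) unfolding proper_length_def by blast
  have Cle: "\<And>y. y \<in> closure KS \<Longrightarrow> len y \<le> S"
  proof -
    have "closed {y. len y \<le> S}" using closed_Collect_le[OF clen continuous_on_const] .
    then have "closure KS \<subseteq> {y. len y \<le> S}" by (intro closure_minimal) (auto simp: KS_def)
    then show "\<And>y. y \<in> closure KS \<Longrightarrow> len y \<le> S" by auto
  qed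
  define E where "E = - (s ` (closure KS - (\<Union>x\<in>B. N x)))"
  have Eopen: "open E"
  proof -
    have "closed (- (\<Union>x\<in>B. N x))" using NO(1) by auto
    then have "compact (closure KS - (\<Union>x\<in>B. N x))" using cC
      by (metis Diff_eq compact_Int_closed)
    then have "compact (s ` (closure KS - (\<Union>x\<in>B. N x)))"
      using compact_continuous_image continuous_on_subset[OF cs] by blast
    then show ?thesis unfolding E_def using compact_imp_closed by blast
  qed
  have uE: "u \<in> E"
  proof -
    have False if "y \<in> closure KS" "y \<notin> (\<Union>x\<in>B. N x)" "s y = u" for y
    proof -
      have "y \<in> B" unfolding Beq using that Cle by auto
      then show False using that NO(2) by blast
    qed
    then show ?thesis unfolding E_def by blast
  qed
  define h where "h x y v = mul (gi x v) (iv (gi y v))" for x y v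
  define c where "c x y = len (mul x (iv y))" for x y
  have hc: "continuous_on (s ` N x \<inter> s ` N y) (\<lambda>v. len (h x y v))" for x y
  proof -
    have c1: "continuous_on (s ` N x \<inter> s ` N y) (gi x)" using continuous_on_subset[OF gic[of x]] by blast
    have c2: "continuous_on (s ` N x \<inter> s ` N y) (\<lambda>v. iv (gi y v))"
      using continuous_on_compose2[OF ci continuous_on_subset[OF gic[of y]]] by blast
    have cp: "continuous_on (s ` N x \<inter> s ` N y) (\<lambda>v. (gi x v, iv (gi y v)))"
      using continuous_on_Pair[OF c1 c2] .
    have im: "(\<lambda>v. (gi x v, iv (gi y v))) ` (s ` N x \<inter> s ` N y) \<subseteq> {p. s (fst p) = r (snd p)}"
    proof
      fix p assume "p \<in> (\<lambda>v. (gi x v, iv (gi y v))) ` (s ` N x \<inter> s ` N y)"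
      then obtain v where v: "v \<in> s ` N x" "v \<in> s ` N y" "p = (gi x v, iv (gi y v))" by blast
      have "s (gi x v) = v" "s (gi y v) = v" using gi2 v by auto
      then show "p \<in> {p. s (fst p) = r (snd p)}" using v(3) gf(4) by simp
    qed
    have "continuous_on (s ` N x \<inter> s ` N y) (\<lambda>v. mul (fst (gi x v, iv (gi y v))) (snd (gi x v, iv (gi y v))))"
      using continuous_on_compose2[OF cm cp im] .
    then have "continuous_on (s ` N x \<inter> s ` N y) (\<lambda>v. h x y v)" unfolding h_def by simp
    then show ?thesis using continuous_on_compose2[OF clen] by blast
  qed
  have lc: "continuous_on (s ` N x) (\<lambda>v. len (gi x v))" for x
    using continuous_on_compose2[OF clen gic[of x]] by blast
  define V1 where "V1 x = (s ` N x \<inter> gi x -` D x) \<inter> (s ` N x \<inter> (\<lambda>v. len (gi x v)) -` {..<S})" for x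
  define V2 where "V2 p = (s ` N (fst p) \<inter> s ` N (snd p)) \<inter> (\<lambda>v. len (h (fst p) (snd p) v)) -` {c (fst p) (snd p) - \<epsilon> <..< c (fst p) (snd p) + \<epsilon>}" for p
  define V where "V = gunits s \<inter> N u \<inter> E \<inter> (\<Inter>x\<in>B. V1 x) \<inter> (\<Inter>p\<in>B\<times>B. V2 p)"
  have V1open: "open (V1 x)" for x
  proof -
    have "open (s ` N x \<inter> gi x -` D x)" using open_preimage_at[OF NO(3) gic Dopen] .
    moreover have "open (s ` N x \<inter> (\<lambda>v. len (gi x v)) -` {..<S})"
      using open_preimage_at[OF NO(3) lc open_lessThan] .
    ultimately show ?thesis unfolding V1_def by (rule open_Int)
  qed
  have V2open: "open (V2 p)" for p
    unfolding V2_def using open_preimage_at[OF open_Int[OF NO(3) NO(3)] hc open_greaterThanLessThan] .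
  have Vopen: "open V" unfolding V_def using unitsopen NO(1) Eopen V1open V2open finB
    by (intro open_Int open_INT) auto
  have uN: "u \<in> s ` N x" if "x \<in> B" for x using sB[OF that] NO(2)[of x] by force
  have giu: "gi x u = x" if "x \<in> B" for x using gi1[OF NO(2)[of x]] sB[OF that] by simp
  have uV: "u \<in> V"
  proof -
    have "u \<in> V1 x" if "x \<in> B" for x unfolding V1_def using uN[OF that] giu[OF that] Dmem Blt[OF that] by auto
    moreover have "u \<in> V2 p" if pB: "p \<in> B \<times> B" for p
    proof -
      obtain x y where p: "p = (x, y)" "x \<in> B" "y \<in> B" using pB by blast
      have "h x y u = mul x (iv y)" unfolding h_def using giu p by simp
      then show ?thesis unfolding V2_def using p uN assms(10) c_def by auto
    qed
    ultimately show ?thesis unfolding V_def using assms(8) NO(2) uE by auto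
  qed
  have Vu: "\<And>v. v \<in> V \<Longrightarrow> s v = v \<and> v \<in> N u \<and> v \<in> E" unfolding V_def gunits_def by auto
  have VB: "\<And>v x. v \<in> V \<Longrightarrow> x \<in> B \<Longrightarrow> v \<in> s ` N x \<and> gi x v \<in> D x \<and> len (gi x v) < S"
    unfolding V_def V1_def by blast
  have VBB: "\<And>v x y. v \<in> V \<Longrightarrow> x \<in> B \<Longrightarrow> y \<in> B \<Longrightarrow> \<bar>len (h x y v) - c x y\<bar> < \<epsilon>"
  proof -
    fix v x y assume a: "v \<in> V" "x \<in> B" "y \<in> B"
    then have "v \<in> V2 (x, y)" unfolding V_def by blast
    then show "\<bar>len (h x y v) - c x y\<bar> < \<epsilon>" unfolding V2_def by auto
  qed
  define sel where "sel a = (THE x. x \<in> B \<and> a \<in> D x)" for a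
  have sel_eq: "sel a = x" if "x \<in> B" "a \<in> D x" for a x
    unfolding sel_def
  proof (rule the_equality)
    show "x \<in> B \<and> a \<in> D x" using that by simp
    fix y assume "y \<in> B \<and> a \<in> D y"
    then show "y = x" using Ddisj[of x y] that by blast
  qed
  define f where "f p = gi (sel (fst p)) (snd p)" for p
  have fxv: "f (x, v) = gi x v" if "x \<in> B" for x v unfolding f_def using sel_eq[OF that Dmem] by simp
  define W where "W = f ` (B \<times> V)"
  have fsv: "s (f (x, v)) = v \<and> f (x, v) \<in> N x" if "x \<in> B" "v \<in> V" for x v
    using fxv[OF that(1)] gi2 VB[OF that(2,1)] by simp
  have fopen: "open (f ` ((B \<times> V) \<inter> Op))" if "open Op" for Op
  proof -
    have "f ` ((B \<times> V) \<inter> Op) = (\<Union>x\<in>B. N x \<inter> s -` (V \<inter> Pair x -` Op))"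
    proof
      show "f ` ((B \<times> V) \<inter> Op) \<subseteq> (\<Union>x\<in>B. N x \<inter> s -` (V \<inter> Pair x -` Op))"
      proof
        fix y assume "y \<in> f ` ((B \<times> V) \<inter> Op)"
        then obtain x v where xv: "x \<in> B" "v \<in> V" "(x, v) \<in> Op" "y = f (x, v)" by blast
        then show "y \<in> (\<Union>x\<in>B. N x \<inter> s -` (V \<inter> Pair x -` Op))" using fsv[OF xv(1,2)] by auto
      qed
      show "(\<Union>x\<in>B. N x \<inter> s -` (V \<inter> Pair x -` Op)) \<subseteq> f ` ((B \<times> V) \<inter> Op)"
      proof
        fix y assume "y \<in> (\<Union>x\<in>B. N x \<inter> s -` (V \<inter> Pair x -` Op))"
        then obtain x where x: "x \<in> B" "y \<in> N x" "s y \<in> V" "(x, s y) \<in> Op" by auto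
        have "y = f (x, s y)" using fxv[OF x(1)] gi1[OF x(2)] by simp
        then show "y \<in> f ` ((B \<times> V) \<inter> Op)" using x by blast
      qed
    qed
    moreover have "open (N x \<inter> s -` (V \<inter> Pair x -` Op))" for x
    proof -
      have "continuous_on UNIV (Pair x)" by (intro continuous_intros)
      then have "open (Pair x -` Op)" using openpre that by blast
      then have "open (V \<inter> Pair x -` Op)" using Vopen by blast
      then have "open (s -` (V \<inter> Pair x -` Op))" using openpre[OF cs] by blast
      then show ?thesis using NO(1) by blast
    qed
    ultimately show ?thesis by auto
  qed
  have Wopen: "open W" unfolding W_def using fopen[OF open_UNIV] by simp
  have fcont: "continuous_on (B \<times> V) f"
  proof -
    have "continuous_on (\<Union>((\<lambda>x. D x \<times> s ` N x) ` B)) f"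
    proof (rule continuous_on_open_Union)
      fix Z assume "Z \<in> (\<lambda>x. D x \<times> s ` N x) ` B"
      then obtain x where x: "x \<in> B" "Z = D x \<times> s ` N x" by blast
      show "open Z" using x Dopen NO(3) by (simp add: open_Times)
      have "continuous_on Z (\<lambda>p. gi x (snd p))"
      proof -
        have "snd ` Z \<subseteq> s ` N x" using x(2) by auto
        then show ?thesis using continuous_on_compose2[OF gic[of x] continuous_on_snd[OF continuous_on_id]] by blast
      qed
      moreover have eq: "gi x (snd p) = f p" if "p \<in> Z" for p
      proof -
        have "fst p \<in> D x" using that x(2) by (simp add: mem_Times_iff)
        then show ?thesis unfolding f_def using sel_eq[OF x(1)] by simp
      qed
      ultimately show "continuous_on Z f" using continuous_on_cong[of Z Z "\<lambda>p. gi x (snd p)" f] by simp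
    qed
    moreover have "B \<times> V \<subseteq> \<Union>((\<lambda>x. D x \<times> s ` N x) ` B)"
    proof
      fix p assume "p \<in> B \<times> V"
      then obtain x v where xv: "p = (x, v)" "x \<in> B" "v \<in> V" by blast
      then have "p \<in> D x \<times> s ` N x" using Dmem VB by simp
      then show "p \<in> \<Union>((\<lambda>x. D x \<times> s ` N x) ` B)" using xv(2) by blast
    qed
    ultimately show ?thesis using continuous_on_subset by blast
  qed
  have finj: "inj_on f (B \<times> V)"
  proof (rule inj_onI)
    fix p q assume pq: "p \<in> B \<times> V" "q \<in> B \<times> V" "f p = f q"
    obtain x v y w where xy: "p = (x, v)" "q = (y, w)" "x \<in> B" "v \<in> V" "y \<in> B" "w \<in> V" using pq by blast
    have "v = w" using fsv[of x v] fsv[of y w] xy pq(3) by metis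
    moreover have "x = y"
    proof (rule ccontr)
      assume "x \<noteq> y"
      have "f p = gi x v" using fxv[OF xy(3)] xy(1) by simp
      then have "f p \<in> D x" using VB[OF xy(4,3)] by simp
      moreover have "f q = gi y w" using fxv[OF xy(5)] xy(2) by simp
      then have "f q \<in> D y" using VB[OF xy(6,5)] by simp
      ultimately have "f p \<in> D x \<inter> D y" using pq(3) by simp
      then show False using Ddisj[OF xy(3,5) `x \<noteq> y`] by simp
    qed
    ultimately show "p = q" using xy by simp
  qed
  obtain g where hom: "homeomorphism (B \<times> V) W f g"
  proof (rule homeomorphism_injective_open_map[OF fcont _ finj])
    show "f ` (B \<times> V) = W" unfolding W_def ..
    fix U assume "openin (top_of_set (B \<times> V)) U"
    then obtain Op where Op: "open Op" "U = (B \<times> V) \<inter> Op" unfolding openin_open by blast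
    have "f ` U \<subseteq> W" unfolding W_def Op by blast
    then show "openin (top_of_set W) (f ` U)" unfolding openin_open using fopen[OF Op(1)] Op(2)
      by (intro exI[of _ "f ` U"]) auto
  qed
  have p1: "\<forall>v\<in>V. f (u, v) = v" using fxv[OF uB] gi1 Vu by metis
  have p2: "\<forall>x\<in>B. f (x, u) = x" using fxv giu by simp
  have p3: "\<forall>v\<in>V. f ` (B \<times> {v}) = closed_ball_rho s iv mul len v S"
  proof
    fix v assume v: "v \<in> V"
    have bv: "closed_ball_rho s iv mul len v S = {y. s y = v \<and> len y \<le> S}"
      using ball_unit[OF grp assms(4)] Vu[OF v] by blast
    show "f ` (B \<times> {v}) = closed_ball_rho s iv mul len v S"
    proof
      show "f ` (B \<times> {v}) \<subseteq> closed_ball_rho s iv mul len v S"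
        unfolding bv using fsv v VB fxv by (force simp: less_imp_le)
      show "closed_ball_rho s iv mul len v S \<subseteq> f ` (B \<times> {v})"
      proof
        fix y assume "y \<in> closed_ball_rho s iv mul len v S"
        then have y: "s y = v" "len y \<le> S" unfolding bv by auto
        show "y \<in> f ` (B \<times> {v})"
        proof (cases "s y = y")
          case True
          then have "y = v" using y by simp
          then have "y = f (u, v)" using p1 v by simp
          then show ?thesis using uB by blast
        next
          case False
          then have "y \<in> KS" unfolding KS_def gunits_def using y(2) by simp
          then have yC: "y \<in> closure KS" using closure_subset by blast
          have vE: "v \<in> E" using Vu v by blast
          have "y \<in> (\<Union>x\<in>B. N x)"
          proof (rule ccontr)
            assume "y \<notin> (\<Union>x\<in>B. N x)"
            then have "s y \<in> s ` (closure KS - (\<Union>x\<in>B. N x))" using yC by blast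
            then show False using vE y(1) unfolding E_def by simp
          qed
          then obtain x where x: "x \<in> B" "y \<in> N x" by blast
          have "y = f (x, v)" using fxv[OF x(1)] gi1[OF x(2)] y(1) by simp
          then show ?thesis using x by blast
        qed
      qed
    qed
  qed
  have p4: "\<forall>x\<in>B. \<forall>y\<in>B. \<forall>v\<in>V.
       \<bar>ext_metric s iv mul len x y - ext_metric s iv mul len (f (x, v)) (f (y, v))\<bar> < ereal \<epsilon>"
  proof (intro ballI)
    fix x y v assume xyv: "x \<in> B" "y \<in> B" "v \<in> V"
    have e1: "ext_metric s iv mul len x y = ereal (c x y)"
      unfolding c_def using metric_same sB xyv by metis
    have "s (f (x, v)) = s (f (y, v))" using fsv xyv by simp
    then have e2: "ext_metric s iv mul len (f (x, v)) (f (y, v)) = ereal (len (h x y v))"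
      unfolding h_def using metric_same fxv xyv by metis
    show "\<bar>ext_metric s iv mul len x y - ext_metric s iv mul len (f (x, v)) (f (y, v))\<bar> < ereal \<epsilon>"
      unfolding e1 e2 using VBB[OF xyv(3,1,2)] by (simp add: abs_minus_commute)
  qed
  have Vin: "openin (top_of_set (gunits s)) V"
    unfolding openin_open using Vopen by (intro exI[of _ V]) (auto simp: V_def)
  show ?thesis
    apply (rule exI[of _ S], rule exI[of _ V], rule exI[of _ W], rule exI[of _ f])
    using S Vin uV Wopen hom p1 p2 p3 p4 unfolding B_def by auto
qed


end
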